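(* Every vertex $v\in V$ belongs to at most $O(D\log n)$ of the sets $\mathsf{LDS}(x,y)$, taken over all independent pairs $(x,y)$.
   Context: $G=(V,E)$ is a connected $n$-vertex graph of diameter $D$ with no cut vertex, $T$ a BFS tree rooted at $s$, $\pi(u,v)$ the $T$-path, $T_x$ the subtree at $x$, $V_x=V(T_x)\setminus\{x\}$. The heavy child of a non-leaf vertex is the child with the largest subtree (ties broken consistently); other children are light. $\mathsf{LD}(x)$, the light descendants of $x$, is the union of $V(T_{x'})$ over light children $x'$ of $x$. $\mathcal{C}_x$ is the set of connected components of $G[V_x]$ and $C_{x,v}$ the one containing $v$. For each $C\in\mathcal{C}_x$ a fixed edge $(u_C,v_C)\in E$ with $v_C\in C$, $u_C\notin V(T_x)$ is chosen and $\pi_x(s,C)=\pi(s,u_C)\circ(u_C,v_C)$. A pair $x,y$ is independent if neither is a $T$-ancestor of the other. For an independent pair, $\mathsf{LDS}(x,y)=\{v\in\mathsf{LD}(x): y\in\pi_x(s,C_{x,v})\}$. *)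

theory Defs
  imports Complex_Main
begin

definition simple_graph :: "'a set \<Rightarrow> ('a \<times> 'a) set \<Rightarrow> bool" where
  "simple_graph V E \<longleftrightarrow> finite V \<and> E \<subseteq> V \<times> V \<and> sym E \<and> (\<forall>x. (x, x) \<notin> E)"

definition conn_in :: "('a \<times> 'a) set \<Rightarrow> 'a set \<Rightarrow> bool" where
  "conn_in E S \<longleftrightarrow> (\<forall>x\<in>S. \<forall>y\<in>S. (x, y) \<in> (E \<inter> S \<times> S)\<^sup>*)"

definition no_cut_vertex :: "'a set \<Rightarrow> ('a \<times> 'a) set \<Rightarrow> bool" where
  "no_cut_vertex V E \<longleftrightarrow> (\<forall>w\<in>V. conn_in E (V - {w}))"

definition gdist :: "('a \<times> 'a) set \<Rightarrow> 'a \<Rightarrow> 'a \<Rightarrow> nat" where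
  "gdist E x y = (LEAST k. (x, y) \<in> E ^^ k)"

definition diam :: "'a set \<Rightarrow> ('a \<times> 'a) set \<Rightarrow> nat" where
  "diam V E = Max {gdist E x y | x y. x \<in> V \<and> y \<in> V}"

text \<open>Rooted spanning tree given by a parent function par (par s is irrelevant).
  x is a T-ancestor of y (reflexively) if x is reached from y by following parents,
  never stepping beyond the root s.\<close>
definition anc :: "('a \<Rightarrow> 'a) \<Rightarrow> 'a \<Rightarrow> 'a \<Rightarrow> 'a \<Rightarrow> bool" where
  "anc par s x y \<longleftrightarrow> (\<exists>k. (par ^^ k) y = x \<and> (\<forall>i<k. (par ^^ i) y \<noteq> s))"

definition bfs_tree :: "'a set \<Rightarrow> ('a \<times> 'a) set \<Rightarrow> 'a \<Rightarrow> ('a \<Rightarrow> 'a) \<Rightarrow> bool" where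
  "bfs_tree V E s par \<longleftrightarrow> s \<in> V \<and>
     (\<forall>v\<in>V - {s}. par v \<in> V \<and> (par v, v) \<in> E \<and> gdist E s v = gdist E s (par v) + 1)"

definition subtree :: "'a set \<Rightarrow> ('a \<Rightarrow> 'a) \<Rightarrow> 'a \<Rightarrow> 'a \<Rightarrow> 'a set" where
  "subtree V par s x = {y \<in> V. anc par s x y}"

definition children :: "'a set \<Rightarrow> ('a \<Rightarrow> 'a) \<Rightarrow> 'a \<Rightarrow> 'a \<Rightarrow> 'a set" where
  "children V par s x = {c \<in> V - {s}. par c = x}"

definition heavy_choice :: "'a set \<Rightarrow> ('a \<Rightarrow> 'a) \<Rightarrow> 'a \<Rightarrow> ('a \<Rightarrow> 'a) \<Rightarrow> bool" where
  "heavy_choice V par s h \<longleftrightarrow> (\<forall>x\<in>V. children V par s x \<noteq> {} \<longrightarrow>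
      h x \<in> children V par s x \<and>
      (\<forall>c\<in>children V par s x. card (subtree V par s c) \<le> card (subtree V par s (h x))))"

definition LD :: "'a set \<Rightarrow> ('a \<Rightarrow> 'a) \<Rightarrow> 'a \<Rightarrow> ('a \<Rightarrow> 'a) \<Rightarrow> 'a \<Rightarrow> 'a set" where
  "LD V par s h x = (\<Union>c\<in>children V par s x - {h x}. subtree V par s c)"

definition Vx :: "'a set \<Rightarrow> ('a \<Rightarrow> 'a) \<Rightarrow> 'a \<Rightarrow> 'a \<Rightarrow> 'a set" where
  "Vx V par s x = subtree V par s x - {x}"

definition comp :: "'a set \<Rightarrow> ('a \<times> 'a) set \<Rightarrow> ('a \<Rightarrow> 'a) \<Rightarrow> 'a \<Rightarrow> 'a \<Rightarrow> 'a \<Rightarrow> 'a set" where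
  "comp V E par s x v =
     {w \<in> Vx V par s x. (v, w) \<in> (E \<inter> Vx V par s x \<times> Vx V par s x)\<^sup>*}"

definition comps :: "'a set \<Rightarrow> ('a \<times> 'a) set \<Rightarrow> ('a \<Rightarrow> 'a) \<Rightarrow> 'a \<Rightarrow> 'a \<Rightarrow> 'a set set" where
  "comps V E par s x = comp V E par s x ` Vx V par s x"

text \<open>Fixed choice of edges (u_C, v_C) with v_C in C and u_C outside V(T_x),
  for every x other than the root (for x = s no such edge can exist).\<close>
definition edge_choice :: "'a set \<Rightarrow> ('a \<times> 'a) set \<Rightarrow> 'a \<Rightarrow> ('a \<Rightarrow> 'a)
    \<Rightarrow> ('a \<Rightarrow> 'a set \<Rightarrow> 'a) \<Rightarrow> ('a \<Rightarrow> 'a set \<Rightarrow> 'a) \<Rightarrow> bool" where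
  "edge_choice V E s par uC vC \<longleftrightarrow> (\<forall>x\<in>V - {s}. \<forall>C\<in>comps V E par s x.
      (uC x C, vC x C) \<in> E \<and> vC x C \<in> C \<and> uC x C \<notin> subtree V par s x)"

text \<open>Vertex set of the path pi_x(s,C) = pi(s,u_C) followed by the edge (u_C,v_C).\<close>
definition pi_x :: "('a \<Rightarrow> 'a) \<Rightarrow> 'a \<Rightarrow> ('a \<Rightarrow> 'a set \<Rightarrow> 'a) \<Rightarrow> ('a \<Rightarrow> 'a set \<Rightarrow> 'a)
    \<Rightarrow> 'a \<Rightarrow> 'a set \<Rightarrow> 'a set" where
  "pi_x par s uC vC x C = {z. anc par s z (uC x C)} \<union> {vC x C}"

definition indep :: "('a \<Rightarrow> 'a) \<Rightarrow> 'a \<Rightarrow> 'a \<Rightarrow> 'a \<Rightarrow> bool" where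
  "indep par s x y \<longleftrightarrow> \<not> anc par s x y \<and> \<not> anc par s y x"

definition LDS :: "'a set \<Rightarrow> ('a \<times> 'a) set \<Rightarrow> 'a \<Rightarrow> ('a \<Rightarrow> 'a) \<Rightarrow> ('a \<Rightarrow> 'a)
    \<Rightarrow> ('a \<Rightarrow> 'a set \<Rightarrow> 'a) \<Rightarrow> ('a \<Rightarrow> 'a set \<Rightarrow> 'a) \<Rightarrow> 'a \<Rightarrow> 'a \<Rightarrow> 'a set" where
  "LDS V E s par h uC vC x y =
     {v \<in> LD V par s h x. y \<in> pi_x par s uC vC x (comp V E par s x v)}"

end

theory Submission
  imports Defs
begin

locale bt =
  fixes V :: "'a set" and E s par
  assumes sg: "simple_graph V E" and bfs: "bfs_tree V E s par"
begin

abbreviation dep where "dep y \<equiv> gdist E s y"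

lemma s_in: "s \<in> V" using bfs unfolding bfs_tree_def by blast
lemma finV: "finite V" using sg unfolding simple_graph_def by blast
lemma par_V: "v \<in> V \<Longrightarrow> v \<noteq> s \<Longrightarrow> par v \<in> V" using bfs unfolding bfs_tree_def by blast
lemma dep_par: "v \<in> V \<Longrightarrow> v \<noteq> s \<Longrightarrow> dep v = dep (par v) + 1" using bfs unfolding bfs_tree_def by blast
lemma dep_s: "dep s = 0" unfolding gdist_def by (rule Least_eq_0) simp
lemma dep_pos: "y \<in> V \<Longrightarrow> y \<noteq> s \<Longrightarrow> dep y \<ge> 1" using dep_par by simp

lemma chain: "y \<in> V \<Longrightarrow> (\<forall>j<i. (par^^j) y \<noteq> s) \<Longrightarrow> (par^^i) y \<in> V \<and> dep ((par^^i) y) + i = dep y"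
proof (induction i)
  case 0 then show ?case by simp
next
  case (Suc i)
  then have h: "(par^^i) y \<in> V" "dep ((par^^i) y) + i = dep y" "(par^^i) y \<noteq> s" by auto
  then show ?case using par_V[OF h(1,3)] dep_par[OF h(1,3)] by simp
qed

lemma notS: "y \<in> V \<Longrightarrow> i \<le> dep y \<Longrightarrow> \<forall>j<i. (par^^j) y \<noteq> s"
proof (induction i)
  case 0 then show ?case by simp
next
  case (Suc i)
  then have IH: "\<forall>j<i. (par^^j) y \<noteq> s" by simp
  from chain[OF Suc.prems(1) IH] Suc.prems(2) have "dep ((par^^i) y) \<noteq> 0" by simp
  then have "(par^^i) y \<noteq> s" using dep_s by auto
  with IH show ?case using less_Suc_eq by auto
qed

lemma anc_s: "y \<in> V \<Longrightarrow> anc par s s y"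
proof -
  assume y: "y \<in> V"
  have ns: "\<forall>j<dep y. (par^^j) y \<noteq> s" using notS[OF y, of "dep y"] by simp
  from chain[OF y ns] have "(par^^dep y) y \<in> V" "dep ((par^^dep y) y) = 0" by auto
  then have "(par^^dep y) y = s" using dep_pos by force
  then show ?thesis unfolding anc_def using ns by blast
qed

lemma anc_D: "y \<in> V \<Longrightarrow> anc par s z y \<Longrightarrow> \<exists>m\<le>dep y. z = (par^^m) y \<and> z \<in> V \<and> dep z + m = dep y"
proof -
  assume y: "y \<in> V" and "anc par s z y"
  then obtain k where k: "(par ^^ k) y = z" "\<forall>i<k. (par ^^ i) y \<noteq> s" unfolding anc_def by blast
  from chain[OF y k(2)] k(1) have "z \<in> V" "dep z + k = dep y" by auto
  then show ?thesis using k(1) by (intro exI[of _ k]) auto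
qed

lemma anc_dep: "y \<in> V \<Longrightarrow> anc par s z y \<Longrightarrow> dep z \<le> dep y"
  using anc_D by fastforce

lemma anc_uniq: "y \<in> V \<Longrightarrow> anc par s z y \<Longrightarrow> anc par s z' y \<Longrightarrow> dep z = dep z' \<Longrightarrow> z = z'"
proof -
  assume y: "y \<in> V" and a: "anc par s z y" "anc par s z' y" and d: "dep z = dep z'"
  from anc_D[OF y a(1)] obtain m where m: "z = (par^^m) y" "dep z + m = dep y" by blast
  from anc_D[OF y a(2)] obtain m' where m': "z' = (par^^m') y" "dep z' + m' = dep y" by blast
  from m m' d have "m = m'" by simp
  with m m' show ?thesis by simp
qed

lemma anc_refl: "anc par s y y" unfolding anc_def by (rule exI[of _ 0]) simp

lemma subtree_par: "c \<noteq> s \<Longrightarrow> subtree V par s c \<subseteq> subtree V par s (par c)"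
proof
  fix y assume c: "c \<noteq> s" and "y \<in> subtree V par s c"
  then obtain k where y: "y \<in> V" and k: "(par ^^ k) y = c" "\<forall>i<k. (par ^^ i) y \<noteq> s"
    unfolding subtree_def anc_def by blast
  have "(par ^^ Suc k) y = par c" using k by simp
  moreover have "\<forall>i<Suc k. (par ^^ i) y \<noteq> s" using k c less_Suc_eq by auto
  ultimately show "y \<in> subtree V par s (par c)" unfolding subtree_def anc_def using y by blast
qed

lemma anc_finite: "u \<in> V \<Longrightarrow> finite {z. anc par s z u} \<and> card {z. anc par s z u} \<le> dep u + 1"
proof -
  assume u: "u \<in> V"
  have sub: "{z. anc par s z u} \<subseteq> (\<lambda>m. (par^^m) u) ` {..dep u}" using anc_D[OF u] by blast
  have "card {z. anc par s z u} \<le> card ((\<lambda>m. (par^^m) u) ` {..dep u})"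
    by (rule card_mono[OF _ sub]) simp
  also have "\<dots> \<le> dep u + 1" using card_image_le[of "{..dep u}"] by simp
  finally show ?thesis using finite_subset[OF sub] by simp
qed

lemma dep_le_diam: "u \<in> V \<Longrightarrow> dep u \<le> diam V E"
proof -
  assume u: "u \<in> V"
  have f: "finite {gdist E x y | x y. x \<in> V \<and> y \<in> V}"
    using finite_image_set2[of "\<lambda>x. x \<in> V" "\<lambda>y. y \<in> V" "gdist E"] finV by simp
  show ?thesis unfolding diam_def by (rule Max_ge[OF f]) (use u s_in in blast)
qed

end

locale bt2 = bt V E s par for V :: "'a set" and E s par +
  fixes h uC vC
  assumes hc: "heavy_choice V par s h" and ec: "edge_choice V E s par uC vC"
begin

lemma subtree_fin: "finite (subtree V par s x)"
  using finV unfolding subtree_def by simp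

lemma child_disj: "c \<in> children V par s x \<Longrightarrow> c' \<in> children V par s x \<Longrightarrow> c \<noteq> c' \<Longrightarrow>
   subtree V par s c \<inter> subtree V par s c' = {}"
proof (rule ccontr)
  assume c: "c \<in> children V par s x" and c': "c' \<in> children V par s x" and ne: "c \<noteq> c'"
    and "subtree V par s c \<inter> subtree V par s c' \<noteq> {}"
  then obtain y where y: "y \<in> V" "anc par s c y" "anc par s c' y" unfolding subtree_def by blast
  from c c' have "dep c = dep c'" unfolding children_def using dep_par by force
  with anc_uniq[OF y] ne show False by blast
qed

lemma LD_elim:
  assumes "v \<in> LD V par s h x"
  obtains c where "c \<in> V" "c \<noteq> s" "par c = x" "c \<noteq> h x" "v \<in> V" "anc par s c v"
  using assms unfolding LD_def children_def subtree_def by blast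

lemma count_light:
  assumes v: "v \<in> V"
  shows "\<exists>L. 2^L \<le> card V \<and> card {x \<in> V - {s}. v \<in> LD V par s h x} \<le> L"
proof -
  define a where "a k = (par^^k) v" for k
  define d where "d = dep v"
  define S where "S k = card (subtree V par s (a k))" for k
  define lt where "lt j \<longleftrightarrow> a j \<noteq> h (a (Suc j))" for j
  have aV: "a k \<in> V" "a k \<noteq> s" if "k < d" for k
  proof -
    have ns: "\<forall>j<Suc k. (par^^j) v \<noteq> s" using notS[OF v, of "Suc k"] that d_def by simp
    then show "a k \<noteq> s" unfolding a_def by simp
    show "a k \<in> V" using chain[OF v, of k] ns unfolding a_def by simp
  qed
  have aS: "a (Suc k) = par (a k)" for k unfolding a_def by simp
  have grow: "S k \<le> S (Suc k) \<and> (lt k \<longrightarrow> 2 * S k \<le> S (Suc k))" if k: "k < d" for k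
  proof -
    have sub: "subtree V par s (a k) \<subseteq> subtree V par s (a (Suc k))"
      using subtree_par[OF aV(2)[OF k]] aS by simp
    have le: "S k \<le> S (Suc k)" unfolding S_def by (rule card_mono[OF subtree_fin sub])
    have "2 * S k \<le> S (Suc k)" if l: "lt k"
    proof -
      have ch: "a k \<in> children V par s (a (Suc k))" unfolding children_def using aV[OF k] aS by simp
      have aSV: "a (Suc k) \<in> V" using par_V[OF aV[OF k]] aS by simp
      from hc aSV ch have hch: "h (a (Suc k)) \<in> children V par s (a (Suc k))"
        and hle: "S k \<le> card (subtree V par s (h (a (Suc k))))"
        unfolding heavy_choice_def S_def by blast+
      have hns: "h (a (Suc k)) \<noteq> s" and hp: "par (h (a (Suc k))) = a (Suc k)"
        using hch unfolding children_def by auto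
      have sub2: "subtree V par s (h (a (Suc k))) \<subseteq> subtree V par s (a (Suc k))"
        using subtree_par[OF hns] hp by simp
      have disj: "subtree V par s (a k) \<inter> subtree V par s (h (a (Suc k))) = {}"
        using child_disj[OF ch hch] l unfolding lt_def by blast
      have "2 * S k \<le> S k + card (subtree V par s (h (a (Suc k))))" using hle by simp
      also have "\<dots> = card (subtree V par s (a k) \<union> subtree V par s (h (a (Suc k))))"
        unfolding S_def by (rule card_Un_disjoint[symmetric, OF subtree_fin subtree_fin disj])
      also have "\<dots> \<le> S (Suc k)" unfolding S_def
        by (rule card_mono[OF subtree_fin]) (use sub sub2 in blast)
      finally show ?thesis .
    qed
    with le show ?thesis by blast
  qed
  have ind: "k \<le> d \<Longrightarrow> 2 ^ card {j. j < k \<and> lt j} \<le> S k" for k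
  proof (induction k)
    case 0
    have "v \<in> subtree V par s (a 0)" unfolding subtree_def a_def using v anc_refl by simp
    then have "S 0 \<ge> 1" unfolding S_def using subtree_fin
      by (metis One_nat_def Suc_leI card_gt_0_iff empty_iff)
    then show ?case by simp
  next
    case (Suc k)
    then have k: "k < d" by simp
    from Suc have IH: "2 ^ card {j. j < k \<and> lt j} \<le> S k" by simp
    show ?case
    proof (cases "lt k")
      case True
      have "{j. j < Suc k \<and> lt j} = insert k {j. j < k \<and> lt j}" using True less_Suc_eq by auto
      then have "card {j. j < Suc k \<and> lt j} = Suc (card {j. j < k \<and> lt j})" by simp
      then show ?thesis using IH grow[OF k] True by simp
    next
      case False
      have "{j. j < Suc k \<and> lt j} = {j. j < k \<and> lt j}" using False less_Suc_eq by auto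
      then show ?thesis using IH grow[OF k] by simp
    qed
  qed
  have Sd: "S d \<le> card V" unfolding S_def by (rule card_mono[OF finV]) (auto simp: subtree_def)
  define J where "J = {j. j < d \<and> lt j}"
  have 1: "2 ^ card J \<le> card V" using ind[of d] Sd unfolding J_def by simp
  have sub: "{x \<in> V - {s}. v \<in> LD V par s h x} \<subseteq> (\<lambda>j. a (Suc j)) ` J"
  proof
    fix x assume "x \<in> {x \<in> V - {s}. v \<in> LD V par s h x}"
    then have "v \<in> LD V par s h x" by simp
    then obtain c where c: "c \<in> V" "c \<noteq> s" "par c = x" "c \<noteq> h x" "anc par s c v"
      by (rule LD_elim)
    from anc_D[OF v c(5)] obtain m where m: "m \<le> d" "c = a m" "dep c + m = d"
      unfolding a_def d_def by blast
    have "m < d" using m dep_pos[OF c(1,2)] by simp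
    moreover have "x = a (Suc m)" using aS m c by simp
    ultimately show "x \<in> (\<lambda>j. a (Suc j)) ` J" unfolding J_def lt_def using c m by auto
  qed
  have "card {x \<in> V - {s}. v \<in> LD V par s h x} \<le> card J"
    using card_mono[OF _ sub] card_image_le[of J "\<lambda>j. a (Suc j)"] unfolding J_def by force
  with 1 show ?thesis by blast
qed

lemma count_main:
  assumes v: "v \<in> V"
  shows "\<exists>L. 2^L \<le> card V \<and> card {(x, y). x \<in> V \<and> y \<in> V \<and> indep par s x y \<and>
                                  v \<in> LDS V E s par h uC vC x y} \<le> L * (diam V E + 2)"
proof -
  define Ls where "Ls = {x \<in> V - {s}. v \<in> LD V par s h x}"
  define B where "B x = pi_x par s uC vC x (comp V E par s x v)" for x
  obtain L where L: "2^L \<le> card V" "card Ls \<le> L" using count_light[OF v] unfolding Ls_def by blast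
  have Bb: "finite (B x) \<and> card (B x) \<le> diam V E + 2" if x: "x \<in> Ls" for x
  proof -
    from x have xV: "x \<in> V" "x \<noteq> s" and "v \<in> LD V par s h x" unfolding Ls_def by auto
    then obtain c where c: "c \<in> V" "c \<noteq> s" "par c = x" "c \<noteq> h x" "anc par s c v"
      by (elim LD_elim)
    have "v \<in> subtree V par s x" using subtree_par[OF c(2)] c v unfolding subtree_def by auto
    moreover have "v \<noteq> x" using anc_dep[OF v c(5)] dep_par[OF c(1,2)] c(3) by auto
    ultimately have "v \<in> Vx V par s x" unfolding Vx_def by simp
    then have "comp V E par s x v \<in> comps V E par s x" unfolding comps_def by simp
    with ec xV have "(uC x (comp V E par s x v), vC x (comp V E par s x v)) \<in> E"
      unfolding edge_choice_def by blast
    then have uV: "uC x (comp V E par s x v) \<in> V" using sg unfolding simple_graph_def by blast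
    have B: "B x = {z. anc par s z (uC x (comp V E par s x v))} \<union> {vC x (comp V E par s x v)}"
      unfolding B_def pi_x_def by simp
    have "card (B x) \<le> card {z. anc par s z (uC x (comp V E par s x v))} + card {vC x (comp V E par s x v)}"
      unfolding B by (rule card_Un_le)
    also have "\<dots> \<le> dep (uC x (comp V E par s x v)) + 2" using anc_finite[OF uV] by simp
    also have "\<dots> \<le> diam V E + 2" using dep_le_diam[OF uV] by simp
    finally show ?thesis using anc_finite[OF uV] B by simp
  qed
  have finLs: "finite Ls" unfolding Ls_def using finV by simp
  have sub: "{(x, y). x \<in> V \<and> y \<in> V \<and> indep par s x y \<and> v \<in> LDS V E s par h uC vC x y}
      \<subseteq> Sigma Ls B"
  proof safe
    fix x y assume "x \<in> V" "y \<in> V" "indep par s x y" "v \<in> LDS V E s par h uC vC x y"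
    moreover have "x \<noteq> s" using anc_s[OF \<open>y \<in> V\<close>] \<open>indep par s x y\<close> unfolding indep_def by blast
    ultimately show "x \<in> Ls" "y \<in> B x" unfolding Ls_def B_def LDS_def by auto
  qed
  have finS: "finite (Sigma Ls B)" using finLs Bb by blast
  have "card {(x, y). x \<in> V \<and> y \<in> V \<and> indep par s x y \<and> v \<in> LDS V E s par h uC vC x y}
      \<le> card (Sigma Ls B)" by (rule card_mono[OF finS sub])
  also have "\<dots> = (\<Sum>x\<in>Ls. card (B x))" using card_SigmaI[OF finLs] Bb by blast
  also have "\<dots> \<le> card Ls * (diam V E + 2)" 
  proof -
    have "(\<Sum>x\<in>Ls. card (B x)) \<le> of_nat (card Ls) * (diam V E + 2)"
      by (rule sum_bounded_above) (use Bb in blast)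
    then show ?thesis by simp
  qed
  also have "\<dots> \<le> L * (diam V E + 2)" using L by (intro mult_right_mono) auto
  finally show ?thesis using L by blast
qed

lemma diam_pos: "2 \<le> card V \<Longrightarrow> 1 \<le> diam V E"
proof -
  assume "2 \<le> card V"
  then obtain y where "y \<in> V" "y \<noteq> s"
    by (metis card_le_Suc0_iff_eq finV not_less_eq_eq numeral_2_eq_2 s_in)
  then show ?thesis using dep_pos dep_le_diam by fastforce
qed

end

lemma arith_final:
  fixes P L D n :: nat
  assumes "2^L \<le> n" "P \<le> L * (D + 2)" "n \<ge> 1" "2 \<le> n \<Longrightarrow> 1 \<le> D"
  shows "real P \<le> 3 / ln 2 * real D * ln (real n)"
proof (cases "L = 0")
  case True
  then have "P = 0" using assms by simp
  moreover have "0 \<le> 3 / ln 2 * real D * ln (real n)" using assms(3) by simp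
  ultimately show ?thesis by simp
next
  case False
  have "(2::nat) \<le> 2^L" using False by (simp add: self_le_power)
  then have D: "1 \<le> D" using assms by simp
  have "ln (2 ^ L :: real) \<le> ln (real n)"
    using assms(1,3) by (subst ln_le_cancel_iff) (auto simp del: of_nat_power simp: of_nat_power[symmetric])
  then have Lln: "real L * ln 2 \<le> ln (real n)" by (simp add: ln_realpow)
  have "real P \<le> real L * (real D + 2)" using assms(2) by (metis of_nat_add of_nat_le_iff of_nat_mult of_nat_numeral)
  also have "\<dots> \<le> 3 * real D * real L" 
  proof -
    have "real L \<le> real D * real L" using D by (simp add: mult_le_cancel_right1)
    then show ?thesis by (simp add: algebra_simps)
  qed
  also have "\<dots> = 3 / ln 2 * real D * (real L * ln 2)" by simp
  also have "\<dots> \<le> 3 / ln 2 * real D * ln (real n)"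
    by (rule mult_left_mono[OF Lln]) simp
  finally show ?thesis .
qed

theorem mainTheorem7:
  shows "\<exists>c::real. \<forall>(V::nat set) E s par h uC vC.
     simple_graph V E \<and> conn_in E V \<and> no_cut_vertex V E \<and> bfs_tree V E s par \<and>
     heavy_choice V par s h \<and> edge_choice V E s par uC vC \<longrightarrow>
     (\<forall>v\<in>V. real (card {(x, y). x \<in> V \<and> y \<in> V \<and> indep par s x y \<and>
                                  v \<in> LDS V E s par h uC vC x y})
             \<le> c * real (diam V E) * ln (real (card V)))"
proof (intro exI[of _ "3 / ln 2"] allI impI ballI)
  fix V :: "nat set" and E s par h uC vC v
  assume A: "simple_graph V E \<and> conn_in E V \<and> no_cut_vertex V E \<and> bfs_tree V E s par \<and>
     heavy_choice V par s h \<and> edge_choice V E s par uC vC" and v: "v \<in> V"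
  interpret bt2 V E s par h uC vC
    using A by unfold_locales auto
  obtain L where L: "2^L \<le> card V" "card {(x, y). x \<in> V \<and> y \<in> V \<and> indep par s x y \<and>
                                  v \<in> LDS V E s par h uC vC x y} \<le> L * (diam V E + 2)"
    using count_main[OF v] by blast
  have "card V \<ge> 1" using v finV by (metis One_nat_def Suc_leI card_gt_0_iff empty_iff)
  then show "real (card {(x, y). x \<in> V \<and> y \<in> V \<and> indep par s x y \<and>
                                  v \<in> LDS V E s par h uC vC x y})
             \<le> 3 / ln 2 * real (diam V E) * ln (real (card V))"
    using arith_final[OF L(1) L(2)] diam_pos by blast
qed

end
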